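(* Let $f:\mathbb{R}^{n_x}\to\mathbb{R}$ be twice continuously differentiable and let $\epsilon_x:\mathbb{R}^{n_x}\to[0,\infty)$. Consider the modified Newton iteration $$x^+ = x-\big(\nabla_{xx}f(x)+\epsilon_x(x)I\big)^{-1}\nabla_x f(x).$$ Let $x^*$ be an equilibrium point, i.e. $\nabla_x f(x^* )=0$. Assume that $\nabla_{xx}f(x^* )$ is invertible and that $\nabla_{xx}f(\cdot)$ is differentiable on a neighborhood of $x^*$. Assume that $\epsilon_x(\cdot)$ is constant on a neighborhood of $x^*$ and satisfies $\nabla_{xx}f(x^* )+\epsilon_x(x^* )I\succ 0$. Then: (i) if $x^*$ is a local minimum of $\min_{x\in\mathbb{R}^{n_x}} f(x)$, then $x^*$ is a locally asymptotically stable equilibrium of the iteration; (ii) if $x^*$ is not a local minimum of $\min_{x\in\mathbb{R}^{n_x}} f(x)$, then $x^*$ is an unstable equilibrium of the iteration.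
   Context: $\nabla_x f$ denotes the gradient and $\nabla_{xx}f$ the Hessian of $f$. The iteration is regarded as the discrete-time dynamical system $x_{k+1}=\Phi(x_k)$ with $\Phi(x)=x-(\nabla_{xx}f(x)+\epsilon_x(x)I)^{-1}\nabla_xf(x)$ (well defined near $x^*$); local asymptotic stability and instability are in the usual sense for such systems. *)

theory Defs
  imports "HOL-Analysis.Analysis"
begin

definition newton_map ::
  "(real^'n::finite \<Rightarrow> real^'n) \<Rightarrow> (real^'n \<Rightarrow> real^'n^'n) \<Rightarrow> (real^'n \<Rightarrow> real)
   \<Rightarrow> real^'n \<Rightarrow> real^'n" where
  "newton_map g H eps x = x - matrix_inv (H x + eps x *\<^sub>R mat 1) *v g x"

definition pos_def_matrix :: "real^'n::finite^'n \<Rightarrow> bool" where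
  "pos_def_matrix A \<longleftrightarrow> (\<forall>v. v \<noteq> 0 \<longrightarrow> v \<bullet> (A *v v) > 0)"

definition lyap_stable :: "('a::metric_space \<Rightarrow> 'a) \<Rightarrow> 'a \<Rightarrow> bool" where
  "lyap_stable Phi xs \<longleftrightarrow>
     (\<forall>e>0. \<exists>d>0. \<forall>x0. dist x0 xs < d \<longrightarrow> (\<forall>k. dist ((Phi ^^ k) x0) xs < e))"

definition loc_asym_stable :: "('a::metric_space \<Rightarrow> 'a) \<Rightarrow> 'a \<Rightarrow> bool" where
  "loc_asym_stable Phi xs \<longleftrightarrow> lyap_stable Phi xs \<and>
     (\<exists>d>0. \<forall>x0. dist x0 xs < d \<longrightarrow> (\<lambda>k. (Phi ^^ k) x0) \<longlonglongrightarrow> xs)"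

definition unstable :: "('a::metric_space \<Rightarrow> 'a) \<Rightarrow> 'a \<Rightarrow> bool" where
  "unstable Phi xs \<longleftrightarrow> \<not> lyap_stable Phi xs"

definition local_min :: "('a::metric_space \<Rightarrow> real) \<Rightarrow> 'a \<Rightarrow> bool" where
  "local_min f xs \<longleftrightarrow> (\<exists>r>0. \<forall>y\<in>ball xs r. f xs \<le> f y)"

end

theory Submission
  imports Defs
begin


lemma matnorm:
  fixes A :: "real^'n::finite^'m::finite"
  shows "norm (A *v x) \<le> real CARD('m) * real CARD('n) * norm A * norm x"
proof -
  have "norm (A *v x) \<le> onorm ((*v) A) * norm x"
    by (rule onorm[OF matrix_vector_mul_bounded_linear])
  also have "onorm ((*v) A) \<le> real CARD('m) * real CARD('n) * norm A"
  proof (rule onorm_le_matrix_component)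
    fix i j
    have "\<bar>A$i$j\<bar> \<le> norm (A$i)" by (rule component_le_norm_cart)
    also have "\<dots> \<le> norm A" by (rule Finite_Cartesian_Product.norm_nth_le)
    finally show "\<bar>A$i$j\<bar> \<le> norm A" .
  qed
  finally show ?thesis by (simp add: mult_right_mono)
qed

lemma mvs[simp]:
  fixes A :: "real^'n::finite^'m::finite"
  shows "A *v (k *\<^sub>R v) = k *\<^sub>R (A *v v)"
  using linear_cmul[OF matrix_vector_mul_linear, of A k v] by simp

lemma matrix_inv_right:
  fixes A :: "real^'n::finite^'n"
  assumes "invertible A" shows "A ** matrix_inv A = mat 1"
  using assms unfolding matrix_inv_def invertible_def
  by (metis (mono_tags, lifting) someI_ex)

lemma inv_apply:
  fixes A :: "real^'n::finite^'n"
  assumes "invertible A" shows "A *v (matrix_inv A *v x) = x"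
  by (simp add: assms matrix_inv_right matrix_vector_mul_assoc)

lemma pd_invertible:
  fixes A :: "real^'n::finite^'n"
  assumes "\<And>v. v \<noteq> 0 \<Longrightarrow> v \<bullet> (A *v v) > 0"
  shows "invertible A"
proof -
  have "\<forall>x. A *v x = 0 \<longrightarrow> x = 0"
    using assms by (metis inner_zero_right less_irrefl)
  then show ?thesis
    by (simp add: invertible_left_inverse matrix_left_invertible_ker)
qed

lemma qf_min:
  fixes A :: "real^'n::finite^'n"
  assumes "\<And>v. v \<noteq> 0 \<Longrightarrow> v \<bullet> (A *v v) > 0"
  shows "\<exists>m>0. \<forall>v. m * (norm v)^2 \<le> v \<bullet> (A *v v)"
proof -
  let ?S = "sphere (0::real^'n) 1"
  have cpt: "compact ?S" by simp
  have ne: "?S \<noteq> {}"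
    by (metis ex_in_conv mem_sphere_0 norm_axis_1)
  have cont: "continuous_on ?S (\<lambda>v. v \<bullet> (A *v v))"
    by (intro continuous_intros linear_continuous_on matrix_vector_mul_bounded_linear)
  obtain w where w: "w \<in> ?S" "\<And>y. y \<in> ?S \<Longrightarrow> w \<bullet> (A *v w) \<le> y \<bullet> (A *v y)"
    using continuous_attains_inf[OF cpt ne cont] by blast
  have "w \<noteq> 0" using w(1) by auto
  then have wpos: "w \<bullet> (A *v w) > 0" using assms by blast
  have "(w \<bullet> (A *v w)) * (norm v)^2 \<le> v \<bullet> (A *v v)" for v
  proof (cases "v = 0")
    case True then show ?thesis by simp
  next
    case False
    define u where "u = (1 / norm v) *\<^sub>R v"
    have u: "u \<in> ?S" using False by (simp add: u_def)
    have vu: "v = norm v *\<^sub>R u" using False by (simp add: u_def)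
    have "v \<bullet> (A *v v) = (norm v)^2 * (u \<bullet> (A *v u))"
      by (subst (1 2) vu) (simp add: matrix_vector_mult_scaleR power2_eq_square algebra_simps)
    then show ?thesis using mult_right_mono[OF w(2)[OF u] zero_le_power2[of "norm v"]] by (simp add: mult.commute)
  qed
  then show ?thesis using wpos by blast
qed



locale newt =
  fixes f :: "real^'n::finite \<Rightarrow> real"
    and g :: "real^'n \<Rightarrow> real^'n"
    and H :: "real^'n \<Rightarrow> real^'n^'n"
  assumes grad: "\<And>x. (f has_derivative (\<lambda>h. g x \<bullet> h)) (at x)"
    and hess: "\<And>x. (g has_derivative (\<lambda>h. H x *v h)) (at x)"
begin

lemma line_deriv:
  "((\<lambda>t. f (a + t *\<^sub>R b)) has_real_derivative (g (a + t *\<^sub>R b) \<bullet> b)) (at t)"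
proof -
  have l: "((\<lambda>t. a + t *\<^sub>R b) has_derivative (\<lambda>h. h *\<^sub>R b)) (at t)"
    by (auto intro!: derivative_eq_intros)
  have D: "((\<lambda>t. f (a + t *\<^sub>R b)) has_derivative (\<lambda>h. g (a + t *\<^sub>R b) \<bullet> (h *\<^sub>R b))) (at t)"
    using has_derivative_compose[OF l grad] by (simp add: o_def)
  then show ?thesis
  proof -
    have "(\<lambda>h. g (a + t *\<^sub>R b) \<bullet> (h *\<^sub>R b)) = (*) (g (a + t *\<^sub>R b) \<bullet> b)"
      by (rule ext) simp
    then show ?thesis using D unfolding has_field_derivative_def by simp
  qed
qed

lemma line_mvt:
  assumes "s > 0"
  shows "\<exists>\<xi>. 0 < \<xi> \<and> \<xi> < s \<and> f (a + s *\<^sub>R b) - f a = s * (g (a + \<xi> *\<^sub>R b) \<bullet> b)"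
  using MVT2[OF assms, of "\<lambda>t. f (a + t *\<^sub>R b)" "\<lambda>t. g (a + t *\<^sub>R b) \<bullet> b"] line_deriv
  by auto

lemma line_mvt2:
  assumes "s > 0"
  shows "\<exists>\<xi>. 0 < \<xi> \<and> \<xi> < s \<and>
     (f (a + s *\<^sub>R b) - f (c + s *\<^sub>R b)) - (f a - f c) = s * ((g (a + \<xi> *\<^sub>R b) - g (c + \<xi> *\<^sub>R b)) \<bullet> b)"
proof -
  have "\<And>x. ((\<lambda>t. f (a + t *\<^sub>R b) - f (c + t *\<^sub>R b)) has_real_derivative
      ((g (a + x *\<^sub>R b) - g (c + x *\<^sub>R b)) \<bullet> b)) (at x)"
    using DERIV_diff[OF line_deriv line_deriv] by (simp add: inner_diff_left)
  from MVT2[OF assms, of "\<lambda>t. f (a + t *\<^sub>R b) - f (c + t *\<^sub>R b)", OF this]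
  show ?thesis by auto
qed

lemma hess_small:
  assumes "e > 0"
  shows "\<exists>d>0. \<forall>y. norm (y - x) < d \<longrightarrow> norm (g y - g x - H x *v (y - x)) \<le> e * norm (y - x)"
  using hess[of x] assms unfolding has_derivative_at_alt by blast

lemma hess_sym: "u \<bullet> (H x *v v) = v \<bullet> (H x *v u)"
proof (rule ccontr)
  assume ne: "u \<bullet> (H x *v v) \<noteq> v \<bullet> (H x *v u)"
  define D where "D = \<bar>u \<bullet> (H x *v v) - v \<bullet> (H x *v u)\<bar>"
  have Dpos: "D > 0" using ne by (simp add: D_def)
  define K where "K = (2 * norm u + norm v) * norm u + (2 * norm v + norm u) * norm v + 1"
  have Kpos: "K > 0" unfolding K_def by (smt (verit) mult_nonneg_nonneg norm_ge_zero)
  define e where "e = D / (2 * K)"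
  have epos: "e > 0" using Dpos Kpos by (simp add: e_def)
  obtain d where d: "d > 0" "\<And>y. norm (y - x) < d \<Longrightarrow> norm (g y - g x - H x *v (y - x)) \<le> e * norm (y - x)"
    using hess_small[OF epos, of x] by blast
  define E where "E y = g y - g x - H x *v (y - x)" for y
  have Eb: "norm (E y) \<le> e * norm (y - x)" if "norm (y - x) < d" for y
    using d(2)[OF that] by (simp add: E_def)
  define t where "t = d / (2 * (norm u + norm v + 1))"
  have tpos: "t > 0" using d(1) unfolding t_def by (smt (verit) divide_pos_pos norm_ge_zero)
  have tsmall: "t * (norm u + norm v) < d"
  proof -
    have "t * (norm u + norm v) < t * (norm u + norm v + 1)" using tpos by simp
    also have "\<dots> = d / 2"
    proof -
      have "norm u + norm v + 1 > 0" by (smt (verit) norm_ge_zero)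
      then show ?thesis unfolding t_def by (simp add: field_simps)
    qed
    finally show ?thesis using d(1) by simp
  qed
  define \<Delta> where "\<Delta> = f (x + t *\<^sub>R u + t *\<^sub>R v) - f (x + t *\<^sub>R u) - f (x + t *\<^sub>R v) + f x"
  have est: "\<bar>\<Delta> - t^2 * (p \<bullet> (H x *v q))\<bar> \<le> e * t^2 * ((2 * norm p + norm q) * norm p)"
    if pq: "\<Delta> = (f (x + t *\<^sub>R q + t *\<^sub>R p) - f (x + t *\<^sub>R p)) - (f (x + t *\<^sub>R q) - f x)"
      and nb: "norm p + norm q \<le> norm u + norm v"
    for p q
  proof -
    obtain \<xi> where xi: "0 < \<xi>" "\<xi> < t"
      "(f ((x + t *\<^sub>R q) + t *\<^sub>R p) - f (x + t *\<^sub>R p)) - (f (x + t *\<^sub>R q) - f x) =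
       t * ((g ((x + t *\<^sub>R q) + \<xi> *\<^sub>R p) - g (x + \<xi> *\<^sub>R p)) \<bullet> p)"
      using line_mvt2[OF tpos, of "x + t *\<^sub>R q" p x] by auto
    have dec: "g ((x + t *\<^sub>R q) + \<xi> *\<^sub>R p) - g (x + \<xi> *\<^sub>R p)
       = t *\<^sub>R (H x *v q) + (E (x + t *\<^sub>R q + \<xi> *\<^sub>R p) - E (x + \<xi> *\<^sub>R p))"
      unfolding E_def by (simp add: vec.add vec.scale vec.diff algebra_simps)
    have n1: "norm (t *\<^sub>R q + \<xi> *\<^sub>R p) \<le> t * norm q + t * norm p"
      using xi tpos norm_triangle_ineq[of "t *\<^sub>R q" "\<xi> *\<^sub>R p"]
        mult_right_mono[of \<xi> t "norm p"] by simp
    have n2: "norm (\<xi> *\<^sub>R p) \<le> t * norm p" using xi mult_right_mono[of \<xi> t "norm p"] by simp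
    have tb: "t * (norm p + norm q) \<le> t * (norm u + norm v)"
      using nb tpos by (simp add: mult_left_mono)
    have "norm (t *\<^sub>R q + \<xi> *\<^sub>R p) < d"
      using n1 tsmall tb by (simp add: algebra_simps)
    then have e1: "norm (E (x + t *\<^sub>R q + \<xi> *\<^sub>R p)) \<le> e * (t * norm q + t * norm p)"
      using Eb[of "x + t *\<^sub>R q + \<xi> *\<^sub>R p"] n1 epos
      by (smt (verit, best) add.assoc add_diff_cancel_left' mult_left_mono)
    have "norm (\<xi> *\<^sub>R p) < d"
      using n2 tsmall tb tpos by (smt (verit) mult_nonneg_nonneg norm_ge_zero distrib_left)
    then have e2: "norm (E (x + \<xi> *\<^sub>R p)) \<le> e * (t * norm p)"
      using Eb[of "x + \<xi> *\<^sub>R p"] n2 epos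
      by (smt (verit, best) add_diff_cancel_left' mult_left_mono)
    have "\<Delta> - t^2 * (p \<bullet> (H x *v q)) = t * ((E (x + t *\<^sub>R q + \<xi> *\<^sub>R p) - E (x + \<xi> *\<^sub>R p)) \<bullet> p)"
    proof -
      have "\<Delta> = t * ((g ((x + t *\<^sub>R q) + \<xi> *\<^sub>R p) - g (x + \<xi> *\<^sub>R p)) \<bullet> p)"
        using pq xi(3) by simp
      also have "\<dots> = t * (t * ((H x *v q) \<bullet> p)) + t * ((E (x + t *\<^sub>R q + \<xi> *\<^sub>R p) - E (x + \<xi> *\<^sub>R p)) \<bullet> p)"
        unfolding dec by (simp add: inner_add_left distrib_left)
      finally show ?thesis by (simp add: power2_eq_square inner_commute)
    qed
    also have "\<bar>\<dots>\<bar> \<le> t * (norm (E (x + t *\<^sub>R q + \<xi> *\<^sub>R p) - E (x + \<xi> *\<^sub>R p)) * norm p)"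
      using tpos by (simp add: abs_mult Cauchy_Schwarz_ineq2 mult_left_mono)
    also have "\<dots> \<le> t * ((e * (t * norm q + t * norm p) + e * (t * norm p)) * norm p)"
      using tpos e1 e2 norm_triangle_ineq4[of "E (x + t *\<^sub>R q + \<xi> *\<^sub>R p)" "E (x + \<xi> *\<^sub>R p)"]
      by (intro mult_left_mono mult_right_mono) auto
    also have "\<dots> = e * t^2 * ((2 * norm p + norm q) * norm p)"
      by (simp add: power2_eq_square algebra_simps)
    finally show ?thesis .
  qed
  have A1: "\<bar>\<Delta> - t^2 * (u \<bullet> (H x *v v))\<bar> \<le> e * t^2 * ((2 * norm u + norm v) * norm u)"
    by (rule est) (simp_all add: \<Delta>_def algebra_simps)
  have A2: "\<bar>\<Delta> - t^2 * (v \<bullet> (H x *v u))\<bar> \<le> e * t^2 * ((2 * norm v + norm u) * norm v)"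
    by (rule est) (simp_all add: \<Delta>_def algebra_simps)
  have "t^2 * D \<le> e * t^2 * ((2 * norm u + norm v) * norm u) + e * t^2 * ((2 * norm v + norm u) * norm v)"
  proof -
    have "t^2 * D = \<bar>t^2 * (u \<bullet> (H x *v v)) - t^2 * (v \<bullet> (H x *v u))\<bar>"
      unfolding D_def right_diff_distrib[symmetric] abs_mult by simp
    then show ?thesis using A1 A2 by linarith
  qed
  also have "\<dots> = t^2 * (e * (K - 1))" by (simp add: K_def algebra_simps)
  also have "\<dots> < t^2 * D"
  proof -
    have "e * (K - 1) < e * K" using epos by simp
    also have "e * K = D / 2" using Kpos by (simp add: e_def)
    finally show ?thesis using tpos Dpos by simp
  qed
  finally show False by simp
qed

end


locale newt_pt = newt f g H for f g H +
  fixes eps :: "real^'n::finite \<Rightarrow> real" and xs :: "real^'n"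
  assumes hess_cont: "continuous_on UNIV H"
    and eps_nonneg: "\<And>x. eps x \<ge> 0"
    and equil: "g xs = 0"
    and hess_inv: "invertible (H xs)"
    and eps_const: "\<exists>r>0. \<forall>x\<in>ball xs r. eps x = eps xs"
    and posdef: "pos_def_matrix (H xs + eps xs *\<^sub>R mat 1)"
begin

lemma inner_lb: "- (norm a * norm b) \<le> a \<bullet> b" for a b :: "real^'n"
  using Cauchy_Schwarz_ineq2[of a b] by linarith

lemma inner_ub: "a \<bullet> b \<le> norm a * norm b" for a b :: "real^'n"
  using Cauchy_Schwarz_ineq2[of a b] by linarith

lemma pd_locmin:
  assumes h: "h > 0" "\<And>v. h * (norm v)^2 \<le> v \<bullet> (H xs *v v)"
  shows "local_min f xs"
proof -
  have h2: "h/2 > 0" using h by simp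
  obtain r where r: "r>0" "\<And>y. norm (y - xs) < r \<Longrightarrow> norm (g y - g xs - H xs *v (y - xs)) \<le> (h/2) * norm (y - xs)"
    using hess_small[OF h2, of xs] by auto
  have "f xs \<le> f y" if y: "y \<in> ball xs r" for y
  proof -
    define v where "v = y - xs"
    have nv: "norm v < r" using y by (simp add: v_def dist_norm norm_minus_commute)
    obtain \<xi> where xi: "0<\<xi>" "\<xi><1" "f (xs + 1 *\<^sub>R v) - f xs = 1 * (g (xs + \<xi> *\<^sub>R v) \<bullet> v)"
      using line_mvt[of 1 xs v] by auto
    have nxv: "norm (\<xi> *\<^sub>R v) < r" using xi nv
      by (smt (verit) mult_left_le_one_le norm_ge_zero norm_scaleR)
    define R where "R = g (xs + \<xi> *\<^sub>R v) - H xs *v (\<xi> *\<^sub>R v)"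
    have E: "norm R \<le> (h/2) * (\<xi> * norm v)"
      using r(2)[of "xs + \<xi> *\<^sub>R v"] nxv equil xi by (simp add: R_def)
    have eq: "g (xs + \<xi> *\<^sub>R v) \<bullet> v = \<xi> * (v \<bullet> (H xs *v v)) + R \<bullet> v"
      by (simp add: R_def inner_commute inner_diff_right)
    have "R \<bullet> v \<ge> - ((h/2) * (\<xi> * norm v) * norm v)"
      using inner_lb[of R v] E mult_right_mono[OF E, of "norm v"] by simp
    moreover have "\<xi> * (v \<bullet> (H xs *v v)) \<ge> \<xi> * (h * (norm v)^2)"
      using h(2)[of v] xi by simp
    ultimately have "g (xs + \<xi> *\<^sub>R v) \<bullet> v \<ge> \<xi> * (h/2) * (norm v)^2"
      unfolding eq by (simp add: power2_eq_square algebra_simps)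
    moreover have "\<xi> * (h/2) * (norm v)^2 \<ge> 0" using xi h by simp
    ultimately show ?thesis using xi(3) by (simp add: v_def)
  qed
  then show ?thesis unfolding local_min_def using r(1) by blast
qed

lemma neg_not_locmin:
  assumes v: "v \<bullet> (H xs *v v) < 0"
  shows "\<not> local_min f xs"
proof
  assume "local_min f xs"
  then obtain r where r: "r > 0" "\<And>y. y \<in> ball xs r \<Longrightarrow> f xs \<le> f y"
    unfolding local_min_def by blast
  define a where "a = - (v \<bullet> (H xs *v v))"
  have apos: "a > 0" using v by (simp add: a_def)
  have vne: "v \<noteq> 0" using v by auto
  then have nvpos: "norm v > 0" by simp
  define e where "e = a / (2 * (norm v)^2)"
  have epos: "e > 0" using apos nvpos by (simp add: e_def)
  obtain r2 where r2: "r2>0" "\<And>y. norm (y - xs) < r2 \<Longrightarrow> norm (g y - g xs - H xs *v (y - xs)) \<le> e * norm (y - xs)"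
    using hess_small[OF epos, of xs] by auto
  define t where "t = min r r2 / (2 * norm v)"
  have tpos: "t > 0" using r r2 nvpos by (simp add: t_def)
  have "t * norm v = min r r2 / 2" using nvpos by (simp add: t_def)
  moreover have "min r r2 > 0" using r r2 by simp
  ultimately have tv: "t * norm v < min r r2" by linarith
  obtain \<xi> where xi: "0<\<xi>" "\<xi><t" "f (xs + t *\<^sub>R v) - f xs = t * (g (xs + \<xi> *\<^sub>R v) \<bullet> v)"
    using line_mvt[OF tpos, of xs v] by auto
  have nxv: "norm (\<xi> *\<^sub>R v) < r2" using xi tv nvpos
    by (smt (verit) mult_right_mono norm_ge_zero norm_scaleR min_less_iff_conj)
  define R where "R = g (xs + \<xi> *\<^sub>R v) - H xs *v (\<xi> *\<^sub>R v)"
  have E: "norm R \<le> e * (\<xi> * norm v)"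
    using r2(2)[of "xs + \<xi> *\<^sub>R v"] nxv equil xi by (simp add: R_def)
  have eq: "g (xs + \<xi> *\<^sub>R v) \<bullet> v = \<xi> * (v \<bullet> (H xs *v v)) + R \<bullet> v"
    by (simp add: R_def inner_commute inner_diff_right)
  have "R \<bullet> v \<le> e * (\<xi> * norm v) * norm v"
    using inner_ub[of R v] mult_right_mono[OF E, of "norm v"] by simp
  also have "\<dots> = \<xi> * (a/2)" using nvpos by (simp add: e_def power2_eq_square)
  finally have "g (xs + \<xi> *\<^sub>R v) \<bullet> v \<le> - \<xi> * (a/2)"
    unfolding eq by (simp add: a_def algebra_simps)
  also have "\<dots> < 0" using xi apos by simp
  finally have "f (xs + t *\<^sub>R v) < f xs"
    using xi(3) tpos by (smt (verit) mult_pos_neg)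
  moreover have "xs + t *\<^sub>R v \<in> ball xs r"
    using tv tpos by (simp add: dist_norm)
  ultimately show False using r(2) by fastforce
qed

end


context newt_pt begin

lemma CARDpos: "real CARD('n) * real CARD('n) > 0"
  by simp

lemma key:
  assumes dpos: "\<delta> > 0"
  shows "\<exists>r>0. \<forall>x. norm (x - xs) < r \<longrightarrow>
    norm ((H xs + eps xs *\<^sub>R mat 1) *v (newton_map g H eps x - xs) - eps xs *\<^sub>R (x - xs))
      \<le> \<delta> * norm (x - xs)"
proof -
  define c where "c = eps xs"
  define M where "M = H xs + c *\<^sub>R mat 1"
  obtain m where m: "m > 0" "\<And>v. m * (norm v)^2 \<le> v \<bullet> (M *v v)"
    using qf_min[of M] posdef unfolding pos_def_matrix_def M_def c_def by blast
  define K where "K = real CARD('n) * real CARD('n)"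
  have Kpos: "K > 0" unfolding K_def by simp
  define L where "L = 2 * (\<bar>c\<bar> + 2) / m"
  have Lpos: "L > 0" using m by (simp add: L_def)
  define e1 where "e1 = min (m / (2*K)) (min (1/K) (\<delta> / (2*K*(L+1))))"
  have e1pos: "e1 > 0" using m Kpos Lpos dpos by (simp add: e1_def)
  have "e1 \<le> m / (2*K)" unfolding e1_def by simp
  then have "K * e1 \<le> K * (m / (2*K))" using Kpos by (intro mult_left_mono) auto
  then have Ke1a: "K * e1 \<le> m/2" using Kpos by simp
  have "e1 \<le> 1/K" unfolding e1_def by simp
  then have "K * e1 \<le> K * (1/K)" using Kpos by (intro mult_left_mono) auto
  then have Ke1b: "K * e1 \<le> 1" using Kpos by simp
  have Ke1c: "K * e1 * (L + 1) \<le> \<delta>/2"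
  proof -
    have "e1 \<le> \<delta> / (2*K*(L+1))" unfolding e1_def by simp
    then have "K * e1 * (L+1) \<le> K * (\<delta> / (2*K*(L+1))) * (L+1)"
      using Kpos Lpos by (intro mult_right_mono mult_left_mono) auto
    also have "\<dots> = \<delta>/2"
    proof -
      have "K * (L+1) \<noteq> 0" using Kpos Lpos by simp
      then show ?thesis by (simp add: field_simps del: distrib_left distrib_right)
    qed
    finally show ?thesis .
  qed
  define e2 where "e2 = min 1 (\<delta>/2)"
  have e2pos: "e2 > 0" using dpos by (simp add: e2_def)
  have e2a: "e2 \<le> 1" "e2 \<le> \<delta>/2" by (simp_all add: e2_def)
  obtain r1 where r1: "r1 > 0" "\<And>x. norm (x - xs) < r1 \<Longrightarrow> norm (H x - H xs) < e1"
    using hess_cont e1pos unfolding continuous_on_iff by (metis UNIV_I dist_norm)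
  obtain r2 where r2: "r2>0" "\<And>y. norm (y - xs) < r2 \<Longrightarrow> norm (g y - g xs - H xs *v (y - xs)) \<le> e2 * norm (y - xs)"
    using hess_small[OF e2pos, of xs] by auto
  obtain r3 where r3: "r3 > 0" "\<And>x. x \<in> ball xs r3 \<Longrightarrow> eps x = c"
    using eps_const unfolding c_def by blast
  define r where "r = min r1 (min r2 r3)"
  have rpos: "r > 0" using r1 r2 r3 by (simp add: r_def)
  have "norm (M *v (newton_map g H eps x - xs) - c *\<^sub>R (x - xs)) \<le> \<delta> * norm (x - xs)"
    if x: "norm (x - xs) < r" for x
  proof -
    define y where "y = x - xs"
    have epsx: "eps x = c" using r3(2)[of x] x by (simp add: r_def dist_norm norm_minus_commute)
    define Dx where "Dx = H x - H xs"
    define Mx where "Mx = H x + c *\<^sub>R mat 1"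
    have MxM: "Mx = M + Dx" by (simp add: Mx_def M_def Dx_def)
    have Db: "norm (Dx *v v) \<le> K * e1 * norm v" for v
    proof -
      have "norm (Dx *v v) \<le> K * norm Dx * norm v" using matnorm[of Dx v] by (simp add: K_def)
      also have "\<dots> \<le> K * e1 * norm v"
        using r1(2)[of x] x Kpos by (intro mult_right_mono mult_left_mono) (auto simp: r_def Dx_def)
      finally show ?thesis .
    qed
    have Mxpd: "(m/2) * (norm v)^2 \<le> v \<bullet> (Mx *v v)" for v
    proof -
      have "v \<bullet> (Mx *v v) = v \<bullet> (M *v v) + v \<bullet> (Dx *v v)"
        by (simp add: MxM matrix_vector_mult_add_rdistrib inner_add_right)
      moreover have "v \<bullet> (Dx *v v) \<ge> - (K * e1 * norm v * norm v)"
        using inner_lb[of v "Dx *v v"] mult_left_mono[OF Db[of v], of "norm v"]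
        by (simp add: mult.commute mult.left_commute)
      moreover have "K * e1 * norm v * norm v \<le> (m/2) * (norm v)^2"
        using mult_right_mono[OF Ke1a, of "norm v * norm v"] by (simp add: power2_eq_square mult.assoc)
      ultimately show ?thesis using m(2)[of v] by linarith
    qed
    have Mxinv: "invertible Mx"
    proof (rule pd_invertible)
      fix v :: "real^'n" assume "v \<noteq> 0"
      then have "(m/2) * (norm v)^2 > 0" using m by simp
      then show "v \<bullet> (Mx *v v) > 0" using Mxpd[of v] by linarith
    qed
    define y' where "y' = newton_map g H eps x - xs"
    have y'eq: "y' = y - matrix_inv Mx *v g x"
      by (simp add: y'_def y_def newton_map_def epsx Mx_def)
    define R where "R = g x - H xs *v y"
    have Rb: "norm R \<le> e2 * norm y"
      using r2(2)[of x] x equil by (simp add: R_def y_def r_def)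
    have Mxy': "Mx *v y' = Dx *v y + c *\<^sub>R y - R"
    proof -
      have a: "Mx *v y' = Mx *v y - g x" by (simp add: y'eq vec.diff inv_apply[OF Mxinv])
      have b: "Mx *v y = H x *v y + c *\<^sub>R y"
        by (simp add: Mx_def matrix_vector_mult_add_rdistrib scaleR_matrix_vector_assoc[symmetric])
      show ?thesis unfolding a b by (simp add: Dx_def R_def matrix_vector_mult_diff_rdistrib)
    qed
    have nMxy': "norm (Mx *v y') \<le> (\<bar>c\<bar> + 2) * norm y"
    proof -
      have "norm (Mx *v y') \<le> norm (Dx *v y) + norm (c *\<^sub>R y) + norm R"
        unfolding Mxy' using norm_triangle_ineq4[of "Dx *v y + c *\<^sub>R y" R]
          norm_triangle_ineq[of "Dx *v y" "c *\<^sub>R y"] by linarith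
      also have "\<dots> \<le> K * e1 * norm y + \<bar>c\<bar> * norm y + e2 * norm y"
        using Db[of y] Rb by simp
      also have "\<dots> \<le> (\<bar>c\<bar> + 2) * norm y"
        using Ke1b e2a mult_right_mono[OF Ke1b, of "norm y"] mult_right_mono[OF e2a(1), of "norm y"]
        by (simp add: algebra_simps)
      finally show ?thesis .
    qed
    have ny': "norm y' \<le> L * norm y"
    proof (cases "y' = 0")
      case True then show ?thesis using Lpos by simp
    next
      case False
      then have pos: "norm y' > 0" by simp
      have "(m/2) * (norm y')^2 \<le> norm y' * ((\<bar>c\<bar> + 2) * norm y)"
        using Mxpd[of y'] inner_ub[of y' "Mx *v y'"] mult_left_mono[OF nMxy', of "norm y'"] by simp
      then have "(m/2) * norm y' \<le> (\<bar>c\<bar> + 2) * norm y"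
        using pos by (simp add: power2_eq_square)
      then show ?thesis using m by (simp add: L_def field_simps)
    qed
    have eqM: "M *v y' - c *\<^sub>R y = Dx *v y - R - Dx *v y'"
      using Mxy' by (simp add: MxM matrix_vector_mult_add_rdistrib algebra_simps)
    have "norm (M *v y' - c *\<^sub>R y) \<le> norm (Dx *v y) + norm R + norm (Dx *v y')"
      unfolding eqM using norm_triangle_ineq4[of "Dx *v y - R" "Dx *v y'"]
          norm_triangle_ineq4[of "Dx *v y" R] by linarith
    also have "\<dots> \<le> K * e1 * norm y + e2 * norm y + K * e1 * (L * norm y)"
    proof -
      have "K*e1*norm y' \<le> K*e1*(L*norm y)"
        by (rule mult_left_mono[OF ny']) (use Kpos e1pos in simp)
      then show ?thesis using Db[of y] Db[of y'] Rb by linarith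
    qed
    also have "\<dots> = K * e1 * (L + 1) * norm y + e2 * norm y" by (simp add: algebra_simps)
    also have "\<dots> \<le> (\<delta>/2) * norm y + (\<delta>/2) * norm y"
      using mult_right_mono[OF Ke1c, of "norm y"] mult_right_mono[OF e2a(2), of "norm y"] by simp
    finally show ?thesis by (simp add: y_def y'_def)
  qed
  then show ?thesis using rpos unfolding M_def c_def by blast
qed

end


context newt_pt begin

lemma stable_part:
  assumes h: "h > 0" "\<And>v. h * (norm v)^2 \<le> v \<bullet> (H xs *v v)"
  shows "loc_asym_stable (newton_map g H eps) xs"
proof -
  define c where "c = eps xs"
  define M where "M = H xs + c *\<^sub>R mat 1"
  define \<Phi> where "\<Phi> = newton_map g H eps"
  have c0: "c \<ge> 0" using eps_nonneg by (simp add: c_def)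
  have h2: "h/2 > 0" using h by simp
  obtain r where r: "r>0" "\<And>x. norm (x - xs) < r \<Longrightarrow> norm (M *v (\<Phi> x - xs) - c *\<^sub>R (x - xs)) \<le> (h/2) * norm (x - xs)"
    using key[OF h2] unfolding M_def c_def \<Phi>_def by auto
  define q where "q = (c + h/2) / (c + h)"
  have q0: "0 \<le> q" using c0 h by (simp add: q_def)
  have q1: "q < 1" using c0 h by (simp add: q_def)
  have step: "norm (\<Phi> x - xs) \<le> q * norm (x - xs)" if x: "norm (x - xs) < r" for x
  proof -
    define y where "y = x - xs"
    define y' where "y' = \<Phi> x - xs"
    define e where "e = M *v y' - c *\<^sub>R y"
    have eb: "norm e \<le> (h/2) * norm y" using r(2)[OF x] by (simp add: e_def y_def y'_def)
    have lo: "(h + c) * (norm y')^2 \<le> y' \<bullet> (M *v y')"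
    proof -
      have "y' \<bullet> (M *v y') = y' \<bullet> (H xs *v y') + c * (norm y')^2"
        by (simp add: M_def matrix_vector_mult_add_rdistrib scaleR_matrix_vector_assoc[symmetric]
            inner_add_right power2_norm_eq_inner)
      then show ?thesis using h(2)[of y'] by (simp add: algebra_simps)
    qed
    have "M *v y' = c *\<^sub>R y + e" by (simp add: e_def)
    then have "y' \<bullet> (M *v y') = c * (y' \<bullet> y) + y' \<bullet> e" by (simp add: inner_add_right)
    also have "\<dots> \<le> c * (norm y' * norm y) + norm y' * norm e"
      using inner_ub[of y' y] inner_ub[of y' e] c0 by (simp add: add_mono mult_left_mono)
    also have "\<dots> \<le> norm y' * ((c + h/2) * norm y)"
      using mult_left_mono[OF eb, of "norm y'"] by (simp add: algebra_simps)
    finally have A: "(h + c) * (norm y')^2 \<le> norm y' * ((c + h/2) * norm y)" using lo by linarith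
    show ?thesis
    proof (cases "y' = 0")
      case True then show ?thesis using q0 by (simp add: y'_def)
    next
      case False
      then have "norm y' > 0" by simp
      then have "(h + c) * norm y' \<le> (c + h/2) * norm y" using A by (simp add: power2_eq_square)
      then have "norm y' \<le> (c + h/2) * norm y / (h + c)" using h c0 by (simp add: field_simps)
      then show ?thesis by (simp add: q_def y_def y'_def add.commute)
    qed
  qed
  have iter: "norm ((\<Phi>^^k) x0 - xs) \<le> q^k * norm (x0 - xs)" if x0: "norm (x0 - xs) < r" for x0 k
  proof (induction k)
    case 0 then show ?case by simp
  next
    case (Suc k)
    have "q^k * norm (x0 - xs) \<le> norm (x0 - xs)"
      using q0 q1 by (simp add: mult_left_le_one_le power_le_one)
    then have "norm ((\<Phi>^^k) x0 - xs) < r" using Suc.IH x0 by linarith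
    then have "norm (\<Phi> ((\<Phi>^^k) x0) - xs) \<le> q * norm ((\<Phi>^^k) x0 - xs)" by (rule step)
    also have "\<dots> \<le> q * (q^k * norm (x0 - xs))" using Suc.IH q0 by (simp add: mult_left_mono)
    finally show ?case by simp
  qed
  have lyap: "lyap_stable \<Phi> xs"
    unfolding lyap_stable_def
  proof (intro allI impI)
    fix e :: real assume e: "e > 0"
    show "\<exists>d>0. \<forall>x0. dist x0 xs < d \<longrightarrow> (\<forall>k. dist ((\<Phi> ^^ k) x0) xs < e)"
    proof (intro exI[of _ "min e r"] conjI allI impI)
      show "min e r > 0" using e r by simp
      fix x0 k assume "dist x0 xs < min e r"
      then have a: "norm (x0 - xs) < e" "norm (x0 - xs) < r" by (auto simp: dist_norm)
      have "q^k * norm (x0 - xs) \<le> norm (x0 - xs)"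
        using q0 q1 by (simp add: mult_left_le_one_le power_le_one)
      then show "dist ((\<Phi> ^^ k) x0) xs < e" using iter[OF a(2), of k] a(1) by (simp add: dist_norm)
    qed
  qed
  have conv: "\<forall>x0. dist x0 xs < r \<longrightarrow> (\<lambda>k. (\<Phi> ^^ k) x0) \<longlonglongrightarrow> xs"
  proof (intro allI impI)
    fix x0 assume "dist x0 xs < r"
    then have a: "norm (x0 - xs) < r" by (simp add: dist_norm)
    have "(\<lambda>k. q^k * norm (x0 - xs)) \<longlonglongrightarrow> 0"
      using q0 q1 by (intro tendsto_mult_left_zero LIMSEQ_power_zero) simp
    then have "(\<lambda>k. (\<Phi> ^^ k) x0 - xs) \<longlonglongrightarrow> 0"
      by (rule Lim_null_comparison[rotated]) (use iter[OF a] in simp)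
    then show "(\<lambda>k. (\<Phi> ^^ k) x0) \<longlonglongrightarrow> xs" by (simp add: LIM_zero_iff)
  qed
  show ?thesis unfolding loc_asym_stable_def \<Phi>_def[symmetric] using lyap conv r(1) by blast
qed

end


lemma matrix_inv_left':
  fixes A :: "real^'n::finite^'n"
  assumes "invertible A" shows "matrix_inv A ** A = mat 1"
  using matrix_inv_right[OF assms] matrix_left_right_inverse by blast

lemma mat_bound: "\<exists>B>0. \<forall>z. norm (A *v z) \<le> B * norm z" for A :: "real^'n::finite^'n"
proof -
  define B where "B = real CARD('n) * real CARD('n) * norm A + 1"
  have "B > 0" unfolding B_def by (simp add: add_nonneg_pos)
  moreover have "norm (A *v z) \<le> B * norm z" for z
    using matnorm[of A z] norm_ge_zero[of z] unfolding B_def distrib_right by linarith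
  ultimately show ?thesis by blast
qed

context newt_pt begin

lemma unstable_part:
  assumes v: "v \<bullet> (H xs *v v) < 0"
  shows "unstable (newton_map g H eps) xs"
proof -
  define c where "c = eps xs"
  define H0 where "H0 = H xs"
  define M where "M = H0 + c *\<^sub>R mat 1"
  define \<Phi> where "\<Phi> = newton_map g H eps"
  define Q where "Q z = z \<bullet> (H0 *v z)" for z
  define V where "V z = - Q z" for z
  have Mv: "M *v z = H0 *v z + c *\<^sub>R z" for z
    by (simp add: M_def matrix_vector_mult_add_rdistrib scaleR_matrix_vector_assoc[symmetric])
  have sym: "a \<bullet> (H0 *v b) = b \<bullet> (H0 *v a)" for a b unfolding H0_def by (rule hess_sym)
  have Mpsd: "0 \<le> w \<bullet> (M *v w)" for w
    using posdef unfolding pos_def_matrix_def M_def c_def H0_def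
    by (cases "w = 0") (auto intro: less_imp_le)
  have vne: "v \<noteq> 0" using v by auto
  have cpos: "c > 0"
  proof -
    have "0 < v \<bullet> (M *v v)"
      using posdef vne unfolding pos_def_matrix_def M_def c_def H0_def by blast
    also have "v \<bullet> (M *v v) = v \<bullet> (H0 *v v) + c * (norm v)^2"
      by (simp add: Mv inner_add_right power2_norm_eq_inner)
    finally have "c * (norm v)^2 > 0" using v unfolding H0_def by linarith
    then show ?thesis using vne by (simp add: zero_less_mult_iff)
  qed
  obtain BH where BH: "BH > 0" "\<And>z. norm (H0 *v z) \<le> BH * norm z" using mat_bound by blast
  obtain BM where BM: "BM > 0" "\<And>z. norm (M *v z) \<le> BM * norm z" using mat_bound by blast
  obtain BN where BN: "BN > 0" "\<And>z. norm (matrix_inv H0 *v z) \<le> BN * norm z" using mat_bound by blast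
  define \<sigma> where "\<sigma> = 1 / BN"
  have spos: "\<sigma> > 0" using BN by (simp add: \<sigma>_def)
  have sig: "\<sigma> * norm z \<le> norm (H0 *v z)" for z
  proof -
    have "z = matrix_inv H0 *v (H0 *v z)"
      using matrix_inv_left'[OF hess_inv] by (simp add: H0_def matrix_vector_mul_assoc)
    then have "norm z \<le> BN * norm (H0 *v z)" using BN(2) by metis
    then show ?thesis using BN(1) by (simp add: \<sigma>_def field_simps)
  qed
  have Qb: "\<bar>Q z\<bar> \<le> BH * (norm z)^2" for z
  proof -
    have "\<bar>Q z\<bar> \<le> norm z * norm (H0 *v z)" unfolding Q_def by (rule Cauchy_Schwarz_ineq2)
    also have "\<dots> \<le> norm z * (BH * norm z)" using BH(2) by (simp add: mult_left_mono)
    finally show ?thesis by (simp add: power2_eq_square mult.commute mult.left_commute)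
  qed
  define C where "C = 2 * BM / c"
  have Cpos: "C > 0" using BM cpos by (simp add: C_def)
  define \<kappa> where "\<kappa> = \<sigma>^2 / (2 * c)"
  have kpos: "\<kappa> > 0" using spos cpos by (simp add: \<kappa>_def)
  define \<delta> where "\<delta> = min (c/2) ((c * \<sigma>^2 / 2) / (3 * BH * BM * C))"
  have dpos: "\<delta> > 0" using cpos spos BH BM Cpos by (simp add: \<delta>_def)
  have d1: "\<delta> \<le> c/2" by (simp add: \<delta>_def)
  have d2: "3 * BH * BM * C * \<delta> \<le> c * \<sigma>^2 / 2"
  proof -
    have "\<delta> \<le> (c * \<sigma>^2 / 2) / (3 * BH * BM * C)" by (simp add: \<delta>_def)
    then have "3 * BH * BM * C * \<delta> \<le> 3 * BH * BM * C * ((c * \<sigma>^2 / 2) / (3 * BH * BM * C))"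
      using BH BM Cpos by (intro mult_left_mono) auto
    also have "\<dots> = c * \<sigma>^2 / 2" using BH BM Cpos by simp
    finally show ?thesis .
  qed
  obtain r where r: "r>0" "\<And>x. norm (x - xs) < r \<Longrightarrow> norm (M *v (\<Phi> x - xs) - c *\<^sub>R (x - xs)) \<le> \<delta> * norm (x - xs)"
    using key[OF dpos] unfolding M_def c_def \<Phi>_def H0_def by auto
  have step: "V (x - xs) + \<kappa> * (norm (\<Phi> x - xs))^2 \<le> V (\<Phi> x - xs)" if x: "norm (x - xs) < r" for x
  proof -
    define y where "y = x - xs"
    define y' where "y' = \<Phi> x - xs"
    define e where "e = M *v y' - c *\<^sub>R y"
    have eb: "norm e \<le> \<delta> * norm y" using r(2)[OF x] by (simp add: e_def y_def y'_def)
    define a where "a = M *v y'"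
    define b where "b = c *\<^sub>R y"
    have ab: "b = a - e" by (simp add: a_def b_def e_def)
    have na: "norm a \<le> BM * norm y'" using BM(2) by (simp add: a_def)
    have ny: "norm y \<le> C * norm y'"
    proof -
      have "c * norm y = norm b" using cpos by (simp add: b_def)
      also have "\<dots> \<le> norm a + norm e" unfolding ab by (rule norm_triangle_ineq4)
      also have "\<dots> \<le> BM * norm y' + (c/2) * norm y"
        using na eb mult_right_mono[OF d1, of "norm y"] by simp
      finally have "(c/2) * norm y \<le> BM * norm y'" by simp
      then show ?thesis using cpos by (simp add: C_def field_simps)
    qed
    have ne: "norm e \<le> \<delta> * C * norm y'"
    proof -
      have "\<delta> * norm y \<le> \<delta> * (C * norm y')" by (rule mult_left_mono[OF ny]) (use dpos in simp)
      then show ?thesis using eb by (simp add: mult.assoc)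
    qed
    have dC: "\<delta> * C \<le> BM" using d1 Cpos cpos mult_right_mono[OF d1, of C] by (simp add: C_def)
    have ne2: "norm e \<le> BM * norm y'"
      using ne mult_right_mono[OF dC, of "norm y'"] by simp
    have Qab: "\<bar>Q a - Q b\<bar> \<le> 3 * BH * BM * C * \<delta> * (norm y')^2"
    proof -
      have "Q a - Q b = e \<bullet> (H0 *v a) + b \<bullet> (H0 *v e)"
        unfolding Q_def ab by (simp add: inner_diff_left inner_diff_right vec.diff sym[of e a])
      then have "\<bar>Q a - Q b\<bar> \<le> norm e * norm (H0 *v a) + norm b * norm (H0 *v e)"
        using Cauchy_Schwarz_ineq2[of e "H0 *v a"] Cauchy_Schwarz_ineq2[of b "H0 *v e"] by linarith
      also have "\<dots> \<le> norm e * (BH * norm a) + norm b * (BH * norm e)"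
        using BH(2)[of a] BH(2)[of e] by (intro add_mono mult_left_mono) auto
      also have "\<dots> \<le> norm e * (BH * norm a) + (norm a + norm e) * (BH * norm e)"
        using norm_triangle_ineq4[of a e] BH(1) ab
        by (intro add_mono mult_right_mono) auto
      also have "\<dots> = BH * norm e * (2 * norm a + norm e)" by (simp add: algebra_simps)
      also have "\<dots> \<le> BH * (\<delta> * C * norm y') * (2 * (BM * norm y') + BM * norm y')"
        using BH(1) ne na ne2 dpos Cpos by (intro mult_mono add_mono) auto
      also have "\<dots> = 3 * BH * BM * C * \<delta> * (norm y')^2" by (simp add: power2_eq_square algebra_simps)
      finally show ?thesis .
    qed
    define w where "w = H0 *v y'"
    have Qa: "Q a - c^2 * Q y' = w \<bullet> (M *v w) + c * (norm w)^2"
    proof -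
      have a': "a = w + c *\<^sub>R y'" by (simp add: a_def w_def Mv)
      have s1: "y' \<bullet> (H0 *v w) = w \<bullet> w" using sym[of y' w] by (simp add: w_def)
      have s2: "y' \<bullet> w = Q y'" by (simp add: Q_def w_def)
      have "Q a = w \<bullet> (H0 *v w) + c * (w \<bullet> w) + c * (y' \<bullet> (H0 *v w)) + c^2 * (y' \<bullet> w)"
        unfolding Q_def a' by (simp add: vec.add inner_add_left inner_add_right w_def power2_eq_square algebra_simps)
      then show ?thesis using s1 s2 by (simp add: Mv inner_add_right power2_norm_eq_inner algebra_simps)
    qed
    have wl: "\<sigma>^2 * (norm y')^2 \<le> (norm w)^2"
    proof -
      have "\<sigma> * norm y' \<le> norm w" using sig by (simp add: w_def)
      then have "(\<sigma> * norm y')^2 \<le> (norm w)^2" using spos by (intro power_mono) auto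
      then show ?thesis by (simp add: power_mult_distrib)
    qed
    have "c^2 * (V y' - V y) = (Q a - c^2 * Q y') - (Q a - Q b)"
      by (simp add: V_def b_def Q_def algebra_simps power2_eq_square)
    also have "\<dots> \<ge> c * \<sigma>^2 * (norm y')^2 - 3 * BH * BM * C * \<delta> * (norm y')^2"
    proof -
      have "c * (\<sigma>^2 * (norm y')^2) \<le> c * (norm w)^2" by (rule mult_left_mono[OF wl]) (use cpos in simp)
      then show ?thesis using Qa Mpsd[of w] Qab by (simp add: mult.assoc)
    qed
    finally have "c^2 * (V y' - V y) \<ge> (c * \<sigma>^2 / 2) * (norm y')^2"
      using mult_right_mono[OF d2, of "(norm y')^2"] by (simp add: algebra_simps)
    then have "c^2 * (V y' - V y) \<ge> c^2 * (\<kappa> * (norm y')^2)"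
      using cpos by (simp add: \<kappa>_def power2_eq_square field_simps)
    then have "V y' - V y \<ge> \<kappa> * (norm y')^2" using cpos by simp
    then show ?thesis by (simp add: y_def y'_def)
  qed
  define \<rho> where "\<rho> = \<kappa> / BH"
  have rhopos: "\<rho> > 0" using kpos BH by (simp add: \<rho>_def)
  have step2: "V (x - xs) \<le> V (\<Phi> x - xs) \<and> V (x - xs) + \<rho> * V (\<Phi> x - xs) \<le> V (\<Phi> x - xs)"
    if x: "norm (x - xs) < r" for x
  proof -
    have "V (\<Phi> x - xs) \<le> BH * (norm (\<Phi> x - xs))^2"
      using Qb[of "\<Phi> x - xs"] by (simp add: V_def)
    then have "\<rho> * V (\<Phi> x - xs) \<le> \<kappa> * (norm (\<Phi> x - xs))^2"
      using BH kpos rhopos mult_left_mono[of "V (\<Phi> x - xs)" "BH * (norm (\<Phi> x - xs))^2" \<rho>]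
      by (simp add: \<rho>_def)
    moreover have "\<kappa> * (norm (\<Phi> x - xs))^2 \<ge> 0" using kpos by simp
    ultimately show ?thesis using step[OF x] by linarith
  qed
  show ?thesis
    unfolding unstable_def \<Phi>_def[symmetric]
  proof
    assume st: "lyap_stable \<Phi> xs"
    obtain d where d: "d > 0" "\<And>x0 k. dist x0 xs < d \<Longrightarrow> dist ((\<Phi> ^^ k) x0) xs < r"
      using st r(1) unfolding lyap_stable_def by blast
    have nvpos: "norm v > 0" using vne by simp
    define t where "t = min d r / (2 * norm v)"
    have tpos: "t > 0" using d r nvpos by (simp add: t_def)
    have "t * norm v = min d r / 2" using nvpos by (simp add: t_def)
    moreover have "min d r > 0" using d r by simp
    ultimately have tv: "t * norm v < d" by linarith
    define x0 where "x0 = xs + t *\<^sub>R v"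
    have dx0: "dist x0 xs < d" using tv tpos by (simp add: x0_def dist_norm)
    define V0 where "V0 = V (x0 - xs)"
    have V0pos: "V0 > 0"
      using v tpos by (simp add: V0_def V_def Q_def x0_def H0_def mult_pos_neg)
    have inball: "norm ((\<Phi> ^^ k) x0 - xs) < r" for k
      using d(2)[OF dx0, of k] by (simp add: dist_norm)
    have grow: "V0 + real k * (\<rho> * V0) \<le> V ((\<Phi> ^^ k) x0 - xs)" for k
    proof (induction k)
      case 0 then show ?case by (simp add: V0_def)
    next
      case (Suc k)
      have s: "V ((\<Phi> ^^ k) x0 - xs) \<le> V (\<Phi> ((\<Phi> ^^ k) x0) - xs) \<and>
          V ((\<Phi> ^^ k) x0 - xs) + \<rho> * V (\<Phi> ((\<Phi> ^^ k) x0) - xs) \<le> V (\<Phi> ((\<Phi> ^^ k) x0) - xs)"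
        by (rule step2[OF inball])
      have "real k * (\<rho> * V0) \<ge> 0" using rhopos V0pos by simp
      then have "V0 \<le> V (\<Phi> ((\<Phi> ^^ k) x0) - xs)" using Suc.IH s by linarith
      then have "\<rho> * V0 \<le> \<rho> * V (\<Phi> ((\<Phi> ^^ k) x0) - xs)" using rhopos by simp
      then show ?case using Suc.IH s by (simp add: algebra_simps)
    qed
    have bnd: "V ((\<Phi> ^^ k) x0 - xs) \<le> BH * r^2" for k
    proof -
      have "V ((\<Phi> ^^ k) x0 - xs) \<le> BH * (norm ((\<Phi> ^^ k) x0 - xs))^2"
        using Qb[of "(\<Phi> ^^ k) x0 - xs"] by (simp add: V_def)
      also have "\<dots> \<le> BH * r^2"
        using inball[of k] BH by (intro mult_left_mono power_mono) auto
      finally show ?thesis .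
    qed
    obtain k :: nat where k: "BH * r^2 / (\<rho> * V0) < real k" using reals_Archimedean2 by blast
    then have "BH * r^2 < real k * (\<rho> * V0)" using rhopos V0pos by (simp add: field_simps)
    then show False using grow[of k] bnd[of k] V0pos by linarith
  qed
qed

end


theorem theorem1:
  fixes f :: "real^'n::finite \<Rightarrow> real"
    and g :: "real^'n \<Rightarrow> real^'n"
    and H :: "real^'n \<Rightarrow> real^'n^'n"
    and eps :: "real^'n \<Rightarrow> real"
    and xs :: "real^'n"
  assumes grad: "\<And>x. (f has_derivative (\<lambda>h. g x \<bullet> h)) (at x)"
    and hess: "\<And>x. (g has_derivative (\<lambda>h. H x *v h)) (at x)"
    and hess_cont: "continuous_on UNIV H"
    and eps_nonneg: "\<And>x. eps x \<ge> 0"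
    and equil: "g xs = 0"
    and hess_inv: "invertible (H xs)"
    and hess_diff: "\<exists>r>0. \<forall>x\<in>ball xs r. H differentiable (at x)"
    and eps_const: "\<exists>r>0. \<forall>x\<in>ball xs r. eps x = eps xs"
    and posdef: "pos_def_matrix (H xs + eps xs *\<^sub>R mat 1)"
  shows "(local_min f xs \<longrightarrow> loc_asym_stable (newton_map g H eps) xs) \<and>
         (\<not> local_min f xs \<longrightarrow> unstable (newton_map g H eps) xs)"
proof -
  interpret N: newt_pt f g H eps xs
    by (unfold_locales) (fact grad hess hess_cont eps_nonneg equil hess_inv eps_const posdef)+
  have sym: "a \<bullet> (H xs *v b) = b \<bullet> (H xs *v a)" for a b by (rule N.hess_sym)
  show ?thesis
  proof (cases "\<forall>v. 0 \<le> v \<bullet> (H xs *v v)")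
    case True
    have pd: "v \<bullet> (H xs *v v) > 0" if vne: "v \<noteq> 0" for v
    proof (rule ccontr)
      assume "\<not> v \<bullet> (H xs *v v) > 0"
      then have z: "v \<bullet> (H xs *v v) = 0" using True by (meson antisym not_less)
      define w where "w = H xs *v v"
      have w0: "w = 0"
      proof (rule ccontr)
        assume "w \<noteq> 0"
        then have wpos: "(norm w)^2 > 0" by simp
        define A where "A = w \<bullet> (H xs *v w)"
        define s where "s = (norm w)^2 / (\<bar>A\<bar> + 1)"
        have spos: "s > 0" using wpos by (simp add: s_def add_nonneg_pos)
        have "0 \<le> (v - s *\<^sub>R w) \<bullet> (H xs *v (v - s *\<^sub>R w))" using True by blast
        also have "(v - s *\<^sub>R w) \<bullet> (H xs *v (v - s *\<^sub>R w)) =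
            v \<bullet> (H xs *v v) - s * (v \<bullet> (H xs *v w)) - s * (w \<bullet> (H xs *v v)) + s^2 * A"
          by (simp add: vec.diff inner_diff_left inner_diff_right A_def power2_eq_square algebra_simps)
        also have "\<dots> = - 2 * s * (norm w)^2 + s^2 * A"
          using z sym[of v w] by (simp add: w_def power2_norm_eq_inner)
        finally have "2 * s * (norm w)^2 \<le> s * (s * A)" by (simp add: power2_eq_square)
        then have a: "2 * (norm w)^2 \<le> s * A" using spos by simp
        have "s * A \<le> s * \<bar>A\<bar>" using spos by (simp add: mult_left_mono)
        also have "s * \<bar>A\<bar> < (norm w)^2"
        proof -
          have "s * (\<bar>A\<bar> + 1) = (norm w)^2" by (simp add: s_def)
          then show ?thesis using spos by (simp add: algebra_simps)
        qed
        finally show False using a wpos by linarith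
      qed
      have "inj ((*v) (H xs))" by (rule inj_matrix_vector_mult[OF hess_inv])
      then have "v = 0" using w0 unfolding w_def by (metis matrix_vector_mult_0_right injD)
      then show False using vne by simp
    qed
    obtain h where h: "h > 0" "\<And>v. h * (norm v)^2 \<le> v \<bullet> (H xs *v v)"
      using qf_min[of "H xs"] pd by blast
    show ?thesis using N.stable_part[OF h] N.pd_locmin[OF h] by blast
  next
    case False
    then obtain v where "v \<bullet> (H xs *v v) < 0" by (auto simp: not_le)
    then show ?thesis using N.neg_not_locmin N.unstable_part by blast
  qed
qed

end
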